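(* Let $(\mathbb{X},\oplus,\otimes,\mathbb{0},\mathbb{1})$ be a linearly ordered, algebraically complete idempotent semifield, and let $\bm{A}_1,\ldots,\bm{A}_m\in\mathbb{X}^{n\times n}$ be matrices such that $\bm{B}=\bm{A}_{1}\oplus\bm{A}_{1}^{-}\oplus\cdots\oplus\bm{A}_{m}\oplus\bm{A}_{m}^{-}$ has no zero entries. Let $\mu$ be the spectral radius of $\bm{B}$ and $\bm{B}_{\mu}=\mu^{-1}\bm{B}$. Consider the problem of minimizing $\max_{1\le i\le m} d(\bm{A}_i,\bm{x}\bm{x}^{-})$ (maximum with respect to the order of $\mathbb{X}$, i.e. $\bigoplus_{i=1}^m d(\bm{A}_i,\bm{x}\bm{x}^{-})$) over all regular vectors $\bm{x}\in\mathbb{X}^n$. Then the minimum value equals $\mu$, and the set of all solutions is $\{\bm{x}=\bm{B}_{\mu}^{\ast}\bm{u}:\bm{u}\in\mathbb{X}^n,\ \bm{u}\ne\bm{0}\}$.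
   Context: An idempotent semifield is a set $\mathbb{X}$ with associative, commutative operations $\oplus$ (addition) and $\otimes$ (multiplication, usually omitted in writing) with neutral elements $\mathbb{0}$ and $\mathbb{1}$, multiplication distributing over addition, idempotent addition ($x\oplus x=x$), and every nonzero $x$ having an inverse $x^{-1}$ with $xx^{-1}=\mathbb{1}$. It is assumed linearly ordered by the order $x\le y \iff x\oplus y=y$, and algebraically complete: $x^p=a$ is solvable for every $a$ and integer $p>0$, so rational powers are defined. Matrix and vector operations use the usual formulas with $\oplus,\otimes$ in place of $+,\times$; $\bm{0}$ is the zero vector; a vector is regular if it has no zero entries. For a nonzero column vector $\bm{x}=(x_i)$, $\bm{x}^{-}$ is the row vector with entries $x_i^{-1}$ if $x_i\ne\mathbb{0}$ and $\mathbb{0}$ otherwise. For a nonzero matrix $\bm{A}=(a_{ij})$, $\bm{A}^{-}=(a^{-}_{ij})$ with $a^{-}_{ij}=a_{ji}^{-1}$ if $a_{ji}\neq\mathbb{0}$ and $\mathbb{0}$ otherwise. The trace is $\mathrm{tr}\,\bm{A}=a_{11}\oplus\cdots\oplus a_{nn}$. The distance between square matrices is $d(\bm{A},\bm{B})=\mathrm{tr}(\bm{B}^{-}\bm{A})\oplus\mathrm{tr}(\bm{A}^{-}\bm{B})$. $\bm{I}$ is the identity matrix, $\bm{A}^0=\bm{I}$, $\bm{A}^p=\bm{A}^{p-1}\bm{A}$. The spectral radius of $\bm{A}$ of order $n$ is $\lambda=\bigoplus_{k=1}^{n}\bigoplus_{1\le i_1,\ldots,i_k\le n}(a_{i_1i_2}a_{i_2i_3}\cdots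 a_{i_ki_1})^{1/k}$. For a square matrix $\bm{M}$ of order $n$, $\bm{M}^{\ast}=\bm{I}\oplus\bm{M}\oplus\cdots\oplus\bm{M}^{n-1}$. *)

theory Defs
  imports Main
begin

text \<open>Addition \<oplus> is rendered by +, multiplication \<otimes> by *, \<zero> by 0, \<one> by 1.
  The convention inverse 0 = 0 is only a totalisation; inverses are only used on nonzero
  elements below.\<close>

class lin_idem_semifield = comm_semiring_1 + linorder + inverse +
  assumes add_idem: "x + x = x"
  and le_iff_add: "x \<le> y \<longleftrightarrow> x + y = y"
  and right_inverse: "x \<noteq> 0 \<Longrightarrow> x * inverse x = 1"
  and inverse_zero_conv: "inverse 0 = 0"
  and alg_complete: "0 < p \<Longrightarrow> \<exists>x. x ^ p = a"

definition root :: "nat \<Rightarrow> 'a::lin_idem_semifield \<Rightarrow> 'a" where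
  "root k a = (THE y. y ^ k = a)"

definition mmult :: "('n::finite \<Rightarrow> 'n \<Rightarrow> 'a::lin_idem_semifield) \<Rightarrow> ('n \<Rightarrow> 'n \<Rightarrow> 'a) \<Rightarrow> 'n \<Rightarrow> 'n \<Rightarrow> 'a" where
  "mmult A B i j = (\<Sum>k\<in>UNIV. A i k * B k j)"

definition mvmult :: "('n::finite \<Rightarrow> 'n \<Rightarrow> 'a::lin_idem_semifield) \<Rightarrow> ('n \<Rightarrow> 'a) \<Rightarrow> 'n \<Rightarrow> 'a" where
  "mvmult A x i = (\<Sum>j\<in>UNIV. A i j * x j)"

definition smult :: "'a::lin_idem_semifield \<Rightarrow> ('n \<Rightarrow> 'n \<Rightarrow> 'a) \<Rightarrow> 'n \<Rightarrow> 'n \<Rightarrow> 'a" where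
  "smult c A i j = c * A i j"

definition idm :: "'n \<Rightarrow> 'n \<Rightarrow> 'a::lin_idem_semifield" where
  "idm i j = (if i = j then 1 else 0)"

primrec mpow :: "('n::finite \<Rightarrow> 'n \<Rightarrow> 'a::lin_idem_semifield) \<Rightarrow> nat \<Rightarrow> 'n \<Rightarrow> 'n \<Rightarrow> 'a" where
  "mpow A 0 = idm"
| "mpow A (Suc p) = mmult (mpow A p) A"

definition mstar :: "('n::finite \<Rightarrow> 'n \<Rightarrow> 'a::lin_idem_semifield) \<Rightarrow> 'n \<Rightarrow> 'n \<Rightarrow> 'a" where
  "mstar M i j = (\<Sum>k<card (UNIV :: 'n set). mpow M k i j)"

definition pinv_vec :: "('n \<Rightarrow> 'a::lin_idem_semifield) \<Rightarrow> 'n \<Rightarrow> 'a" where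
  "pinv_vec x i = (if x i = 0 then 0 else inverse (x i))"

definition pinv_mat :: "('n \<Rightarrow> 'n \<Rightarrow> 'a::lin_idem_semifield) \<Rightarrow> 'n \<Rightarrow> 'n \<Rightarrow> 'a" where
  "pinv_mat A i j = (if A j i = 0 then 0 else inverse (A j i))"

definition outer :: "('n \<Rightarrow> 'a::lin_idem_semifield) \<Rightarrow> 'n \<Rightarrow> 'n \<Rightarrow> 'a" where
  "outer x i j = x i * pinv_vec x j"

definition mtrace :: "('n::finite \<Rightarrow> 'n \<Rightarrow> 'a::lin_idem_semifield) \<Rightarrow> 'a" where
  "mtrace A = (\<Sum>i\<in>UNIV. A i i)"

definition mdist :: "('n::finite \<Rightarrow> 'n \<Rightarrow> 'a::lin_idem_semifield) \<Rightarrow> ('n \<Rightarrow> 'n \<Rightarrow> 'a) \<Rightarrow> 'a" where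
  "mdist A B = mtrace (mmult (pinv_mat B) A) + mtrace (mmult (pinv_mat A) B)"

definition regular :: "('n \<Rightarrow> 'a::lin_idem_semifield) \<Rightarrow> bool" where
  "regular x \<longleftrightarrow> (\<forall>i. x i \<noteq> 0)"

definition cyc_weight :: "('n \<Rightarrow> 'n \<Rightarrow> 'a::lin_idem_semifield) \<Rightarrow> 'n list \<Rightarrow> 'a" where
  "cyc_weight A is = (\<Prod>t<length is. A (is ! t) (is ! ((t + 1) mod length is)))"

definition sprad :: "('n::finite \<Rightarrow> 'n \<Rightarrow> 'a::lin_idem_semifield) \<Rightarrow> 'a" where
  "sprad A = (\<Sum>k\<in>{1..card (UNIV :: 'n set)}. \<Sum>is\<in>{is. length is = k}. root k (cyc_weight A is))"

end

theory Submission
  imports Defs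
begin

context lin_idem_semifield begin

lemma zero_le [simp]: "0 \<le> x"
  by (simp add: le_iff_add)

lemma add_le_iff [simp]: "a + b \<le> c \<longleftrightarrow> a \<le> c \<and> b \<le> c"
proof
  assume "a + b \<le> c"
  hence h: "a + b + c = c" by (simp add: le_iff_add)
  have "a + c = a + (a + b + c)" using h by simp
  also have "\<dots> = a + b + c" by (metis add.assoc add_idem)
  finally have 1: "a + c = c" using h by simp
  have "b + c = b + (a + b + c)" using h by simp
  also have "\<dots> = a + b + c" by (metis add.assoc add.commute add_idem)
  finally have 2: "b + c = c" using h by simp
  show "a \<le> c \<and> b \<le> c" using 1 2 by (simp add: le_iff_add)
next
  assume "a \<le> c \<and> b \<le> c"
  hence "a + c = c" "b + c = c" by (simp_all add: le_iff_add)
  hence "a + b + c = c" by (metis add.assoc)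
  thus "a + b \<le> c" by (simp add: le_iff_add)
qed

lemma le_add1: "a \<le> a + b" and le_add2: "b \<le> a + b"
  using add_le_iff[of a b "a+b"] by auto

lemma sum_le_iff: "finite S \<Longrightarrow> sum f S \<le> c \<longleftrightarrow> (\<forall>x\<in>S. f x \<le> c)"
  by (induction S rule: finite_induct) auto

lemma member_le_sum: "finite S \<Longrightarrow> x \<in> S \<Longrightarrow> f x \<le> sum f S"
  using sum_le_iff[of S f "sum f S"] by auto

lemma mult_right_mono': "a \<le> b \<Longrightarrow> a * c \<le> b * c"
  by (simp add: le_iff_add) (metis distrib_right)

lemma mult_left_mono': "a \<le> b \<Longrightarrow> c * a \<le> c * b"
  using mult_right_mono'[of a b c] by (simp add: mult.commute)

lemma mult_mono'': "a \<le> b \<Longrightarrow> c \<le> d \<Longrightarrow> a * c \<le> b * d"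
  by (meson mult_left_mono' mult_right_mono' order_trans)

lemma power_mono': "a \<le> b \<Longrightarrow> a ^ k \<le> b ^ k"
  by (induction k) (auto intro: mult_mono'')

lemma mult_eq_0: "a * b = 0 \<longleftrightarrow> a = 0 \<or> b = 0"
proof
  assume h: "a * b = 0"
  show "a = 0 \<or> b = 0"
  proof (rule ccontr)
    assume "\<not> (a = 0 \<or> b = 0)"
    hence "a \<noteq> 0" by auto
    have "b = inverse a * (a * b)" using right_inverse[OF \<open>a \<noteq> 0\<close>]
      by (metis mult.assoc mult.commute mult_1_right)
    thus False using h \<open>\<not> (a = 0 \<or> b = 0)\<close> by simp
  qed
qed auto

lemma inverse_nz: "a \<noteq> 0 \<Longrightarrow> inverse a \<noteq> 0"
  by (metis mult_zero_right right_inverse zero_neq_one)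

lemma left_inverse: "a \<noteq> 0 \<Longrightarrow> inverse a * a = 1"
  using right_inverse by (simp add: mult.commute)

lemma inverse_unique: "a * y = 1 \<Longrightarrow> y = inverse a"
proof -
  assume h: "a * y = 1"
  hence "a \<noteq> 0" by auto
  have "y = y * (a * inverse a)" using right_inverse[OF \<open>a\<noteq>0\<close>] by simp
  also have "\<dots> = (a * y) * inverse a" by (simp add: ac_simps)
  finally show ?thesis using h by simp
qed

lemma inverse_mult: "a \<noteq> 0 \<Longrightarrow> b \<noteq> 0 \<Longrightarrow> inverse (a * b) = inverse a * inverse b"
proof -
  assume "a \<noteq> 0" "b \<noteq> 0"
  have "(a * b) * (inverse a * inverse b) = (a * inverse a) * (b * inverse b)" by (simp add: ac_simps)
  also have "\<dots> = 1" using right_inverse \<open>a \<noteq> 0\<close> \<open>b \<noteq> 0\<close> by simp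
  finally show ?thesis using inverse_unique by metis
qed

lemma inverse_inverse: "a \<noteq> 0 \<Longrightarrow> inverse (inverse a) = a"
  using inverse_unique[of "inverse a" a] left_inverse by metis

lemma mult_le_iff_le_inv: "b \<noteq> 0 \<Longrightarrow> a * b \<le> c \<longleftrightarrow> a \<le> c * inverse b"
proof
  assume "b \<noteq> 0" "a * b \<le> c"
  hence "a * b * inverse b \<le> c * inverse b" by (intro mult_right_mono')
  thus "a \<le> c * inverse b" using right_inverse[OF \<open>b\<noteq>0\<close>] by (simp add: mult.assoc)
next
  assume "b \<noteq> 0" "a \<le> c * inverse b"
  hence "a * b \<le> c * inverse b * b" by (intro mult_right_mono')
  thus "a * b \<le> c" using left_inverse[OF \<open>b\<noteq>0\<close>] by (simp add: mult.assoc)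
qed

lemma one_le_power_ge: "1 \<le> c \<Longrightarrow> 0 < k \<Longrightarrow> c \<le> c ^ k"
proof (induction k)
  case (Suc k)
  show ?case
  proof (cases "k = 0")
    case False
    hence "c \<le> c ^ k" using Suc by auto
    hence "1 * c \<le> c * c ^ k" using Suc(2) by (intro mult_mono'') auto
    thus ?thesis by simp
  qed simp
qed simp

lemma power_inj_le: "a \<le> b \<Longrightarrow> a ^ k = b ^ k \<Longrightarrow> 0 < k \<Longrightarrow> a = b"
proof -
  assume ab: "a \<le> b" and eq: "a ^ k = b ^ k" and k: "0 < k"
  show "a = b"
  proof (cases "a = 0")
    case True
    hence "b ^ k = 0" using eq k by (simp add: zero_power)
    hence "b = 0" by (induction k) (auto simp: mult_eq_0)
    thus ?thesis using True by simp
  next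
    case False
    define c where "c = b * inverse a"
    have "a * inverse a \<le> c" using mult_right_mono'[OF ab] c_def by simp
    hence c1: "1 \<le> c" using right_inverse[OF False] by simp
    have "c ^ k = b ^ k * inverse a ^ k" by (simp add: c_def power_mult_distrib)
    also have "\<dots> = (a * inverse a) ^ k" using eq by (simp add: power_mult_distrib)
    finally have "c ^ k = 1" using right_inverse[OF False] by simp
    hence "c \<le> 1" using one_le_power_ge[OF c1 k] by simp
    hence "c = 1" using c1 by simp
    hence "b * inverse a * a = a" by (simp add: c_def)
    thus ?thesis using left_inverse[OF False] by (simp add: mult.assoc)
  qed
qed

lemma power_le_imp_le: "a ^ k \<le> b ^ k \<Longrightarrow> 0 < k \<Longrightarrow> a \<le> b"
proof (rule ccontr)
  assume h: "a ^ k \<le> b ^ k" "0 < k" "\<not> a \<le> b"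
  hence "b \<le> a" by simp
  hence "b ^ k \<le> a ^ k" by (rule power_mono')
  hence "b ^ k = a ^ k" using h by simp
  hence "b = a" using power_inj_le[OF \<open>b \<le> a\<close>] h by simp
  thus False using h by simp
qed

end

lemma root_power: "0 < k \<Longrightarrow> (root k (a::'a::lin_idem_semifield)) ^ k = a"
proof -
  assume k: "0 < k"
  obtain y where y: "y ^ k = a" using alg_complete[OF k, of a] by blast
  have uniq: "z = y" if z: "z ^ k = a" for z
  proof (cases "z \<le> y")
    case True
    have "z ^ k = y ^ k" using z y by simp
    thus ?thesis using power_inj_le[OF True _ k] by blast
  next
    case False hence yz: "y \<le> z" by simp
    have "y ^ k = z ^ k" using z y by simp
    thus ?thesis using power_inj_le[OF yz _ k] by blast
  qed
  have "root k a = y" unfolding root_def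
    by (rule the_equality[of "\<lambda>y. y ^ k = a"], rule y, rule uniq)
  thus ?thesis using y by simp
qed

lemma root_1: "root 1 (a::'a::lin_idem_semifield) = a"
  using root_power[of 1 a] by simp

definition pw :: "('n \<Rightarrow> 'n \<Rightarrow> 'a::lin_idem_semifield) \<Rightarrow> nat \<Rightarrow> (nat \<Rightarrow> 'n) \<Rightarrow> 'a" where
  "pw M k p = (\<Prod>t<k. M (p t) (p (Suc t)))"

lemma pw_Suc: "pw M (Suc k) p = pw M k p * M (p k) (p (Suc k))"
  by (simp add: pw_def)

lemma pw_cong: "(\<And>t. t \<le> k \<Longrightarrow> p t = q t) \<Longrightarrow> pw M k p = pw M k q"
  unfolding pw_def by (intro prod.cong) auto

lemma pow_le:
  fixes M :: "'n::finite \<Rightarrow> 'n \<Rightarrow> 'a::lin_idem_semifield"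
  shows "mpow M k i j \<le> c \<longleftrightarrow> (\<forall>p. p 0 = i \<longrightarrow> p k = j \<longrightarrow> pw M k p \<le> c)"
proof (induction k arbitrary: j c)
  case 0
  show ?case
  proof (cases "i = j")
    case True
    have "\<exists>p. p 0 = i" by (rule exI[of _ "\<lambda>_. i"]) simp
    thus ?thesis using True by (auto simp: idm_def pw_def)
  qed (auto simp: idm_def pw_def)
next
  case (Suc k)
  have "mpow M (Suc k) i j \<le> c \<longleftrightarrow> (\<forall>l. mpow M k i l * M l j \<le> c)"
    by (simp add: mmult_def sum_le_iff)
  also have "\<dots> \<longleftrightarrow> (\<forall>l p. p 0 = i \<longrightarrow> p k = l \<longrightarrow> pw M k p * M l j \<le> c)"
  proof (intro iff_allI)
    fix l
    show "mpow M k i l * M l j \<le> c \<longleftrightarrow> (\<forall>p. p 0 = i \<longrightarrow> p k = l \<longrightarrow> pw M k p * M l j \<le> c)"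
    proof (cases "M l j = 0")
      case False
      show ?thesis using Suc.IH[of l "c * inverse (M l j)"]
        by (simp add: mult_le_iff_le_inv[OF False])
    qed simp
  qed
  also have "\<dots> \<longleftrightarrow> (\<forall>p. p 0 = i \<longrightarrow> p (Suc k) = j \<longrightarrow> pw M (Suc k) p \<le> c)"
  proof
    assume h: "\<forall>l p. p 0 = i \<longrightarrow> p k = l \<longrightarrow> pw M k p * M l j \<le> c"
    show "\<forall>p. p 0 = i \<longrightarrow> p (Suc k) = j \<longrightarrow> pw M (Suc k) p \<le> c"
      using h by (auto simp: pw_Suc)
  next
    assume h: "\<forall>p. p 0 = i \<longrightarrow> p (Suc k) = j \<longrightarrow> pw M (Suc k) p \<le> c"
    show "\<forall>l p. p 0 = i \<longrightarrow> p k = l \<longrightarrow> pw M k p * M l j \<le> c"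
    proof (intro allI impI)
      fix l p assume a: "p 0 = i" "p k = l"
      define q where "q = p(Suc k := j)"
      have "pw M k q = pw M k p" by (rule pw_cong) (simp add: q_def)
      moreover have "q 0 = i" "q (Suc k) = j" "q k = l" using a by (auto simp: q_def)
      ultimately show "pw M k p * M l j \<le> c" using h[rule_format, of q]
        by (simp add: pw_Suc)
    qed
  qed
  finally show ?case .
qed

lemma pw_le_mpow:
  fixes M :: "'n::finite \<Rightarrow> 'n \<Rightarrow> 'a::lin_idem_semifield"
  shows "pw M k p \<le> mpow M k (p 0) (p k)"
  using pow_le[of M k "p 0" "p k" "mpow M k (p 0) (p k)"] by auto

lemma mpow_le_mstar:
  fixes M :: "'n::finite \<Rightarrow> 'n \<Rightarrow> 'a::lin_idem_semifield"
  shows "k < card (UNIV::'n set) \<Longrightarrow> mpow M k i j \<le> mstar M i j"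
  unfolding mstar_def by (rule member_le_sum) auto

lemma cyc_weight_segment:
  fixes M :: "'n \<Rightarrow> 'n \<Rightarrow> 'a::lin_idem_semifield"
  assumes ab: "a < b" and pab: "p a = p b"
  shows "cyc_weight M (map (\<lambda>t. p (a + t)) [0..<b - a]) = (\<Prod>t\<in>{a..<b}. M (p t) (p (Suc t)))"
proof -
  define L where "L = b - a"
  define xs where "xs = map (\<lambda>t. p (a + t)) [0..<L]"
  have len: "length xs = L" by (simp add: xs_def)
  have h1: "xs ! t = p (a + t)" if "t < L" for t using that by (simp add: xs_def)
  have h2: "xs ! (Suc t mod L) = p (Suc (a + t))" if t: "t < L" for t
  proof (cases "t + 1 < L")
    case True thus ?thesis by (simp add: h1)
  next
    case False
    hence e: "t + 1 = L" using t by simp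
    hence "Suc t mod L = 0" by simp
    moreover have "a + Suc t = b" using e ab by (simp add: L_def)
    moreover have "0 < L" using ab by (simp add: L_def)
    ultimately show ?thesis using pab h1[of 0] by simp
  qed
  have "cyc_weight M xs = (\<Prod>t<L. M (xs ! t) (xs ! ((t + 1) mod L)))"
    by (simp add: cyc_weight_def len)
  also have "\<dots> = (\<Prod>t<L. M (p (a + t)) (p (a + Suc t)))"
    proof (rule prod.cong[OF refl])
    fix t assume "t \<in> {..<L}"
    hence "t < L" by simp
    show "M (xs ! t) (xs ! ((t + 1) mod L)) = M (p (a + t)) (p (a + Suc t))"
      using h1[OF \<open>t < L\<close>] h2[OF \<open>t < L\<close>] by simp
  qed
  also have "\<dots> = (\<Prod>t\<in>{0..<L}. M (p (t + a)) (p (Suc (t + a))))"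
    by (simp add: lessThan_atLeast0 add.commute)
  also have "\<dots> = (\<Prod>t\<in>{0 + a..<L + a}. M (p t) (p (Suc t)))"
    by (rule prod.shift_bounds_nat_ivl[symmetric])
  also have "\<dots> = (\<Prod>t\<in>{a..<b}. M (p t) (p (Suc t)))" using ab by (simp add: L_def)
  finally show ?thesis by (simp add: xs_def L_def)
qed

lemma path_le_mstar:
  fixes M :: "'n::finite \<Rightarrow> 'n \<Rightarrow> 'a::lin_idem_semifield"
  assumes cyc: "\<And>is. 1 \<le> length is \<Longrightarrow> length is \<le> card (UNIV::'n set) \<Longrightarrow> cyc_weight M is \<le> 1"
  shows "pw M k p \<le> mstar M (p 0) (p k)"
proof (induction k arbitrary: p rule: less_induct)
  case (less k)
  let ?n = "card (UNIV::'n set)"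
  show ?case
  proof (cases "k < ?n")
    case True
    thus ?thesis using pw_le_mpow[of M k p] mpow_le_mstar[OF True, of M "p 0" "p k"] by simp
  next
    case False
    have "\<not> inj_on p {0..?n}"
    proof
      assume "inj_on p {0..?n}"
      hence "card {0..?n} \<le> ?n" using card_inj_on_le[of p "{0..?n}" UNIV] by simp
      thus False by simp
    qed
    then obtain a0 b0 where "a0 \<in> {0..?n}" "b0 \<in> {0..?n}" "a0 \<noteq> b0" "p a0 = p b0"
      unfolding inj_on_def by blast
    then obtain a b where ab: "a < b" "b \<le> ?n" "p a = p b"
      by (metis atLeastAtMost_iff linorder_neqE_nat)
    define L where "L = b - a"
    define q where "q t = (if t \<le> a then p t else p (t + L))" for t
    have L: "0 < L" "L \<le> k" "a + L = b" using ab False by (auto simp: L_def)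
    define f where "f t = M (p t) (p (Suc t))" for t
    have qa: "\<And>t. a \<le> t \<Longrightarrow> q t = p (t + L)"
      using ab L by (auto simp: q_def)
    have q0: "q 0 = p 0" by (simp add: q_def)
    have qk: "q (k - L) = p k"
      using qa[of "k - L"] L ab False by simp
    have IH: "pw M (k - L) q \<le> mstar M (q 0) (q (k - L))"
      using less.IH[of "k - L" q] L by simp
    have split: "pw M k p = (\<Prod>t\<in>{0..<a}. f t) * (\<Prod>t\<in>{a..<b}. f t) * (\<Prod>t\<in>{b..<k}. f t)"
      unfolding pw_def f_def using ab False
      by (simp add: prod.atLeastLessThan_concat lessThan_atLeast0)
    have s0: "pw M (k - L) q = (\<Prod>t\<in>{0..<a}. M (q t) (q (Suc t))) * (\<Prod>t\<in>{a..<k - L}. M (q t) (q (Suc t)))"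
      unfolding pw_def using ab L False
      by (simp add: prod.atLeastLessThan_concat lessThan_atLeast0)
    have s1: "(\<Prod>t\<in>{0..<a}. M (q t) (q (Suc t))) = (\<Prod>t\<in>{0..<a}. f t)"
      by (intro prod.cong) (auto simp: q_def f_def)
    have "(\<Prod>t\<in>{a..<k - L}. M (q t) (q (Suc t))) = (\<Prod>t\<in>{a..<k - L}. f (t + L))"
      by (intro prod.cong) (auto simp: qa f_def)
    also have "\<dots> = (\<Prod>t\<in>{a + L..<k - L + L}. f t)"
      by (rule prod.shift_bounds_nat_ivl[symmetric])
    also have "\<dots> = (\<Prod>t\<in>{b..<k}. f t)" using L by simp
    finally have s2: "(\<Prod>t\<in>{a..<k - L}. M (q t) (q (Suc t))) = (\<Prod>t\<in>{b..<k}. f t)" .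
    have split2: "pw M (k - L) q = (\<Prod>t\<in>{0..<a}. f t) * (\<Prod>t\<in>{b..<k}. f t)"
      using s0 s1 s2 by simp
    have "(\<Prod>t\<in>{a..<b}. f t) = cyc_weight M (map (\<lambda>t. p (a + t)) [0..<b - a])"
      unfolding f_def using cyc_weight_segment[OF ab(1) ab(3), of M] by simp
    also have "\<dots> \<le> 1" using ab by (intro cyc) auto
    finally have C: "(\<Prod>t\<in>{a..<b}. f t) \<le> 1" .
    have "pw M k p \<le> (\<Prod>t\<in>{0..<a}. f t) * 1 * (\<Prod>t\<in>{b..<k}. f t)"
      unfolding split by (intro mult_mono'' C order_refl)
    also have "\<dots> = pw M (k - L) q" using split2 by simp
    also have "\<dots> \<le> mstar M (p 0) (p k)" using IH q0 qk by simp
    finally show ?thesis .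
  qed
qed

lemma pinv_outer:
  fixes x :: "'n \<Rightarrow> 'a::lin_idem_semifield"
  assumes "regular x"
  shows "pinv_mat (outer x) r k = inverse (x k) * x r"
proof -
  have nz: "x k \<noteq> 0" "x r \<noteq> 0" using assms by (auto simp: regular_def)
  have "outer x k r = x k * inverse (x r)" using nz by (simp add: outer_def pinv_vec_def)
  moreover have "x k * inverse (x r) \<noteq> 0" using nz by (simp add: mult_eq_0 inverse_nz)
  ultimately show ?thesis using nz
    by (simp add: pinv_mat_def inverse_mult inverse_nz inverse_inverse)
qed

lemma mdist_outer:
  fixes x :: "'n::finite \<Rightarrow> 'a::lin_idem_semifield"
  assumes "regular x"
  shows "mdist A (outer x) = (\<Sum>r\<in>UNIV. \<Sum>s\<in>UNIV. inverse (x r) * (A r s + pinv_mat A r s) * x s)"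
proof -
  have nz: "\<And>k. x k \<noteq> 0" using assms by (auto simp: regular_def)
  have 1: "mtrace (mmult (pinv_mat (outer x)) A) = (\<Sum>r\<in>UNIV. \<Sum>k\<in>UNIV. inverse (x k) * A k r * x r)"
    unfolding mtrace_def mmult_def using pinv_outer[OF assms]
    by (simp add: ac_simps)
  also have "\<dots> = (\<Sum>k\<in>UNIV. \<Sum>r\<in>UNIV. inverse (x k) * A k r * x r)"
    by (rule sum.swap)
  finally have 1: "mtrace (mmult (pinv_mat (outer x)) A) = (\<Sum>r\<in>UNIV. \<Sum>s\<in>UNIV. inverse (x r) * A r s * x s)" .
  have 2: "mtrace (mmult (pinv_mat A) (outer x)) = (\<Sum>r\<in>UNIV. \<Sum>s\<in>UNIV. inverse (x r) * pinv_mat A r s * x s)"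
    unfolding mtrace_def mmult_def outer_def pinv_vec_def using nz
    by (simp add: ac_simps)
  show ?thesis unfolding mdist_def 1 2
    by (simp add: sum.distrib[symmetric] distrib_left distrib_right)
qed

lemma obj_formula:
  fixes x :: "'n::finite \<Rightarrow> 'a::lin_idem_semifield"
    and A :: "nat \<Rightarrow> ('n \<Rightarrow> 'n \<Rightarrow> 'a)"
  assumes "regular x"
    and B_def: "B = (\<lambda>r s. \<Sum>i\<in>{1..m}. A i r s + pinv_mat (A i) r s)"
  shows "(\<Sum>i\<in>{1..m}. mdist (A i) (outer x)) = (\<Sum>r\<in>UNIV. \<Sum>s\<in>UNIV. inverse (x r) * B r s * x s)"
proof -
  have "(\<Sum>i\<in>{1..m}. mdist (A i) (outer x)) =
     (\<Sum>i\<in>{1..m}. \<Sum>r\<in>UNIV. \<Sum>s\<in>UNIV. inverse (x r) * (A i r s + pinv_mat (A i) r s) * x s)"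
    using mdist_outer[OF assms(1)] by simp
  also have "\<dots> = (\<Sum>r\<in>UNIV. \<Sum>i\<in>{1..m}. \<Sum>s\<in>UNIV. inverse (x r) * (A i r s + pinv_mat (A i) r s) * x s)"
    by (rule sum.swap)
  also have "\<dots> = (\<Sum>r\<in>UNIV. \<Sum>s\<in>UNIV. \<Sum>i\<in>{1..m}. inverse (x r) * (A i r s + pinv_mat (A i) r s) * x s)"
    by (rule sum.cong[OF refl], rule sum.swap)
  also have "\<dots> = (\<Sum>r\<in>UNIV. \<Sum>s\<in>UNIV. inverse (x r) * B r s * x s)"
    unfolding B_def by (simp add: sum_distrib_left sum_distrib_right)
  finally show ?thesis .
qed

lemma finite_lists_len: "finite {is :: ('n::finite) list. length is = k}"
  using finite_lists_length_eq[OF finite_UNIV, of k] by simp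

lemma cyc_le_sprad:
  fixes B :: "'n::finite \<Rightarrow> 'n \<Rightarrow> 'a::lin_idem_semifield"
  assumes "1 \<le> length is" "length is \<le> card (UNIV::'n set)"
  shows "root (length is) (cyc_weight B is) \<le> sprad B"
proof -
  have "root (length is) (cyc_weight B is) \<le> (\<Sum>is'\<in>{is'. length is' = length is}. root (length is) (cyc_weight B is'))"
    by (rule member_le_sum[OF finite_lists_len]) simp
  also have "\<dots> \<le> sprad B" unfolding sprad_def
    by (rule member_le_sum[where f = "\<lambda>k. \<Sum>is\<in>{is. length is = k}. root k (cyc_weight B is)"]) (use assms in auto)
  finally show ?thesis .
qed

lemma cyc_weight_le:
  fixes B :: "'n::finite \<Rightarrow> 'n \<Rightarrow> 'a::lin_idem_semifield"
  assumes "1 \<le> length is" "length is \<le> card (UNIV::'n set)"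
  shows "cyc_weight B is \<le> sprad B ^ length is"
proof -
  have "root (length is) (cyc_weight B is) ^ length is \<le> sprad B ^ length is"
    by (rule power_mono'[OF cyc_le_sprad[OF assms]])
  moreover have "0 < length is" using assms(1) by linarith
  ultimately show ?thesis using root_power[of "length is" "cyc_weight B is"] by simp
qed

lemma cyc_weight_smult: "cyc_weight (smult c B) is = c ^ length is * cyc_weight B is"
  by (simp add: cyc_weight_def smult_def prod.distrib)

lemma sprad_nz:
  fixes B :: "'n::finite \<Rightarrow> 'n \<Rightarrow> 'a::lin_idem_semifield"
  assumes "\<forall>r s. B r s \<noteq> 0"
  shows "sprad B \<noteq> 0"
proof -
  fix i :: 'n
  have "root (length [i]) (cyc_weight B [i]) \<le> sprad B"
    by (rule cyc_le_sprad) (auto simp: Suc_le_eq finite_UNIV_card_ge_0)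
  moreover have "root (length [i]) (cyc_weight B [i]) = B i i"
    using root_1[of "B i i"] by (simp add: cyc_weight_def)
  ultimately have "B i i \<le> sprad B" by simp
  thus ?thesis using assms by (metis zero_le antisym)
qed

lemma prod_le_power:
  fixes f :: "'b \<Rightarrow> 'a::lin_idem_semifield"
  shows "finite A \<Longrightarrow> (\<And>t. t \<in> A \<Longrightarrow> f t \<le> c) \<Longrightarrow> prod f A \<le> c ^ card A"
  by (induction A rule: finite_induct) (auto intro: mult_mono'')

lemma lower_bound:
  fixes B :: "'n::finite \<Rightarrow> 'n \<Rightarrow> 'a::lin_idem_semifield"
  assumes "regular x"
  shows "sprad B \<le> (\<Sum>r\<in>UNIV. \<Sum>s\<in>UNIV. inverse (x r) * B r s * x s)"
proof -
  let ?S = "\<Sum>r\<in>UNIV. \<Sum>s\<in>UNIV. inverse (x r) * B r s * x s"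
  have nz: "\<And>k. x k \<noteq> 0" using assms by (auto simp: regular_def)
  have T: "inverse (x r) * B r s * x s \<le> ?S" for r s
    by (rule order_trans[OF member_le_sum[of UNIV s] member_le_sum[of UNIV r]]) auto
  have "root k (cyc_weight B is) \<le> ?S" if "length is = k" "1 \<le> k" for k "is"
  proof -
    let ?f = "\<lambda>t. is ! t" and ?g = "\<lambda>t. is ! ((t + 1) mod k)"
    have k: "0 < k" using that by simp
    have perm: "(\<Prod>t<k. x (?g t)) = (\<Prod>t<k. x (?f t))"
    proof -
      have "bij_betw (\<lambda>t. (t + 1) mod k) {..<k} {..<k}"
      proof (rule bij_betw_imageI)
        show "inj_on (\<lambda>t. (t + 1) mod k) {..<k}"
          unfolding inj_on_def
        proof (intro ballI impI)
          fix a b assume ab: "a \<in> {..<k}" "b \<in> {..<k}" "(a + 1) mod k = (b + 1) mod k"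
          have "(a + 1) mod k = (if a + 1 = k then 0 else a + 1)" using ab(1) by auto
          moreover have "(b + 1) mod k = (if b + 1 = k then 0 else b + 1)" using ab(2) by auto
          ultimately show "a = b" using ab(3) by (auto split: if_splits)
        qed
        show "(\<lambda>t. (t + 1) mod k) ` {..<k} = {..<k}"
          by (rule endo_inj_surj) (use k \<open>inj_on (\<lambda>t. (t + 1) mod k) {..<k}\<close> in auto)
      qed
      thus ?thesis by (rule prod.reindex_bij_betw[where h = "\<lambda>t. (t + 1) mod k" and g = "\<lambda>j. x (is ! j)"])
    qed
    have "(\<Prod>t<k. inverse (x (?f t)) * B (?f t) (?g t) * x (?g t)) =
          cyc_weight B is * ((\<Prod>t<k. inverse (x (?f t))) * (\<Prod>t<k. x (?g t)))"
      unfolding cyc_weight_def that by (simp add: prod.distrib ac_simps)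
    also have "(\<Prod>t<k. inverse (x (?f t))) * (\<Prod>t<k. x (?g t)) = (\<Prod>t<k. inverse (x (?f t)) * x (?f t))"
      using perm by (simp add: prod.distrib[symmetric])
    also have "\<dots> = 1" using nz by (simp add: left_inverse)
    finally have eq: "(\<Prod>t<k. inverse (x (?f t)) * B (?f t) (?g t) * x (?g t)) = cyc_weight B is" by simp
    have "(\<Prod>t<k. inverse (x (?f t)) * B (?f t) (?g t) * x (?g t)) \<le> (\<Prod>t<k. ?S)"
      using prod_le_power[of "{..<k}" "\<lambda>t. inverse (x (?f t)) * B (?f t) (?g t) * x (?g t)" ?S] T by simp
    hence "cyc_weight B is \<le> ?S ^ k" using eq by simp
    hence "root k (cyc_weight B is) ^ k \<le> ?S ^ k" by (simp only: root_power[OF k])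
    thus ?thesis using power_le_imp_le k by blast
  qed
  thus ?thesis unfolding sprad_def
    by (auto simp: sum_le_iff finite_lists_len)
qed

lemma path_pot:
  fixes M :: "'n \<Rightarrow> 'n \<Rightarrow> 'a::lin_idem_semifield"
  assumes sub: "\<And>r s. M r s * x s \<le> x r"
  shows "pw M k p * x (p k) \<le> x (p 0)"
proof (induction k)
  case 0 thus ?case by (simp add: pw_def)
next
  case (Suc k)
  have "pw M (Suc k) p * x (p (Suc k)) = pw M k p * (M (p k) (p (Suc k)) * x (p (Suc k)))"
    by (simp add: pw_Suc mult.assoc)
  also have "\<dots> \<le> pw M k p * x (p k)" by (intro mult_left_mono' sub)
  also have "\<dots> \<le> x (p 0)" by (rule Suc.IH)
  finally show ?case .
qed

lemma mstar_ge_1: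
  fixes M :: "'n::finite \<Rightarrow> 'n \<Rightarrow> 'a::lin_idem_semifield"
  shows "1 \<le> mstar M j j"
  using mpow_le_mstar[of 0 M j j] by (simp add: idm_def finite_UNIV_card_ge_0)

lemma mstar_fix:
  fixes M :: "'n::finite \<Rightarrow> 'n \<Rightarrow> 'a::lin_idem_semifield"
  assumes sub: "\<And>r s. M r s * x s \<le> x r" and reg: "regular x"
  shows "mvmult (mstar M) x = x"
proof
  fix i
  have nz: "\<And>k. x k \<noteq> 0" using reg by (auto simp: regular_def)
  have "mpow M k i j * x j \<le> x i" for k j
  proof -
    have "\<forall>p. p 0 = i \<longrightarrow> p k = j \<longrightarrow> pw M k p \<le> x i * inverse (x j)"
      using path_pot[OF sub] by (auto simp: mult_le_iff_le_inv[OF nz, symmetric])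
    hence "mpow M k i j \<le> x i * inverse (x j)" using pow_le by blast
    thus ?thesis by (simp add: mult_le_iff_le_inv[OF nz])
  qed
  hence le: "mvmult (mstar M) x i \<le> x i"
    by (simp add: mvmult_def mstar_def sum_distrib_right sum_le_iff)
  have "x i = 1 * x i" by simp
  also have "\<dots> \<le> mstar M i i * x i" by (intro mult_right_mono' mstar_ge_1)
  also have "\<dots> \<le> mvmult (mstar M) x i" unfolding mvmult_def
    by (rule member_le_sum[where f = "\<lambda>j. mstar M i j * x j"]) auto
  finally show "mvmult (mstar M) x i = x i" using le by simp
qed

lemma pw_cons:
  "pw M (Suc k) (\<lambda>t. case t of 0 \<Rightarrow> r | Suc t' \<Rightarrow> p t') = M r (p 0) * pw M k p"
  unfolding pw_def by (subst prod.lessThan_Suc_shift) simp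

lemma mstar_sub:
  fixes M :: "'n::finite \<Rightarrow> 'n \<Rightarrow> 'a::lin_idem_semifield"
  assumes cyc: "\<And>is. 1 \<le> length is \<Longrightarrow> length is \<le> card (UNIV::'n set) \<Longrightarrow> cyc_weight M is \<le> 1"
  shows "M r s * mstar M s j \<le> mstar M r j"
proof -
  have "M r s * mpow M k s j \<le> mstar M r j" for k
  proof (cases "M r s = 0")
    case False
    have "\<forall>p. p 0 = s \<longrightarrow> p k = j \<longrightarrow> pw M k p \<le> mstar M r j * inverse (M r s)"
    proof (intro allI impI)
      fix p :: "nat \<Rightarrow> 'n" assume p: "p 0 = s" "p k = j"
      let ?q = "\<lambda>t. case t of 0 \<Rightarrow> r | Suc t' \<Rightarrow> p t'"
      have "pw M (Suc k) ?q \<le> mstar M (?q 0) (?q (Suc k))" by (rule path_le_mstar[OF cyc])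
      hence "pw M k p * M r s \<le> mstar M r j" using p by (simp add: pw_cons mult.commute)
      thus "pw M k p \<le> mstar M r j * inverse (M r s)" by (simp add: mult_le_iff_le_inv[OF False])
    qed
    hence "mpow M k s j \<le> mstar M r j * inverse (M r s)" using pow_le by blast
    thus ?thesis by (subst mult.commute) (simp add: mult_le_iff_le_inv[OF False])
  qed simp
  thus ?thesis by (simp add: mstar_def sum_distrib_left sum_le_iff)
qed

lemma star_vec_sub:
  fixes M :: "'n::finite \<Rightarrow> 'n \<Rightarrow> 'a::lin_idem_semifield"
  assumes cyc: "\<And>is. 1 \<le> length is \<Longrightarrow> length is \<le> card (UNIV::'n set) \<Longrightarrow> cyc_weight M is \<le> 1"
  shows "M r s * mvmult (mstar M) u s \<le> mvmult (mstar M) u r"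
proof -
  have "M r s * (mstar M s j * u j) \<le> mstar M r j * u j" for j
    using mult_right_mono'[OF mstar_sub[OF cyc, of r s j], of "u j"] by (simp add: mult.assoc)
  also have "mstar M r j * u j \<le> mvmult (mstar M) u r" for j unfolding mvmult_def
    by (rule member_le_sum[where f = "\<lambda>j. mstar M r j * u j"]) auto
  finally show ?thesis by (simp add: mvmult_def sum_distrib_left sum_le_iff)
qed

lemma conv_le:
  fixes \<mu> :: "'a::lin_idem_semifield"
  assumes "a \<noteq> 0" "\<mu> \<noteq> 0"
  shows "inverse a * y \<le> \<mu> \<longleftrightarrow> inverse \<mu> * y \<le> a"
proof -
  have "inverse a * y \<le> \<mu> \<longleftrightarrow> y \<le> \<mu> * a"
    using mult_le_iff_le_inv[OF inverse_nz[OF assms(1)], of y \<mu>]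
    by (simp add: mult.commute inverse_inverse[OF assms(1)])
  moreover have "inverse \<mu> * y \<le> a \<longleftrightarrow> y \<le> a * \<mu>"
    using mult_le_iff_le_inv[OF inverse_nz[OF assms(2)], of y a]
    by (simp add: mult.commute inverse_inverse[OF assms(2)])
  ultimately show ?thesis by (simp add: mult.commute)
qed

theorem theorem2:
  fixes A :: "nat \<Rightarrow> ('n::finite \<Rightarrow> 'n \<Rightarrow> 'a::lin_idem_semifield)"
    and m :: nat and B :: "'n \<Rightarrow> 'n \<Rightarrow> 'a" and \<mu> :: 'a
  assumes B_def: "B = (\<lambda>r s. \<Sum>i\<in>{1..m}. A i r s + pinv_mat (A i) r s)"
    and B_nz: "\<forall>r s. B r s \<noteq> 0"
    and mu_def: "\<mu> = sprad B"
  shows "(\<forall>x. regular x \<longrightarrow> \<mu> \<le> (\<Sum>i\<in>{1..m}. mdist (A i) (outer x)))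
       \<and> (\<exists>x. regular x \<and> (\<Sum>i\<in>{1..m}. mdist (A i) (outer x)) = \<mu>)
       \<and> {x. regular x \<and> (\<Sum>i\<in>{1..m}. mdist (A i) (outer x)) = \<mu>}
         = {mvmult (mstar (smult (inverse \<mu>) B)) u | u. u \<noteq> (\<lambda>_. 0)}"
proof -
  define M where "M = smult (inverse \<mu>) B"
  define S where "S x = (\<Sum>r\<in>UNIV. \<Sum>s\<in>UNIV. inverse (x r) * B r s * x s)" for x :: "'n \<Rightarrow> 'a"
  have obj: "(\<Sum>i\<in>{1..m}. mdist (A i) (outer x)) = S x" if "regular x" for x
    unfolding S_def by (rule obj_formula[OF that B_def])
  have lb: "\<mu> \<le> S x" if "regular x" for x
    unfolding S_def mu_def by (rule lower_bound[OF that])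
  have mu_nz: "\<mu> \<noteq> 0" unfolding mu_def by (rule sprad_nz[OF B_nz])
  have Sle: "S x \<le> c \<longleftrightarrow> (\<forall>r s. inverse (x r) * B r s * x s \<le> c)" for x c
    unfolding S_def by (simp add: sum_le_iff)
  have cyc: "cyc_weight M is \<le> 1" if "1 \<le> length is" "length is \<le> card (UNIV::'n set)" for "is"
  proof -
    have "cyc_weight M is = inverse \<mu> ^ length is * cyc_weight B is"
      unfolding M_def by (rule cyc_weight_smult)
    also have "\<dots> \<le> inverse \<mu> ^ length is * \<mu> ^ length is"
      unfolding mu_def by (intro mult_left_mono' cyc_weight_le that)
    also have "\<dots> = (inverse \<mu> * \<mu>) ^ length is" by (simp add: power_mult_distrib)
    also have "\<dots> = 1" using left_inverse[OF mu_nz] by simp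
    finally show ?thesis .
  qed
  have Mnz: "M r s \<noteq> 0" for r s
    using B_nz mu_nz by (simp add: M_def smult_def mult_eq_0 inverse_nz)
  have sub_iff: "S x \<le> \<mu> \<longleftrightarrow> (\<forall>r s. M r s * x s \<le> x r)" if "regular x" for x
  proof -
    have "inverse (x r) * B r s * x s \<le> \<mu> \<longleftrightarrow> M r s * x s \<le> x r" for r s
      using conv_le[of "x r" \<mu> "B r s * x s"] that mu_nz
      by (simp add: regular_def M_def smult_def mult.assoc)
    thus ?thesis using Sle by simp
  qed
  have setEq: "{x. regular x \<and> (\<Sum>i\<in>{1..m}. mdist (A i) (outer x)) = \<mu>}
         = {mvmult (mstar M) u | u. u \<noteq> (\<lambda>_. 0)}"
  proof (intro set_eqI iffI)
    fix x assume "x \<in> {x. regular x \<and> (\<Sum>i\<in>{1..m}. mdist (A i) (outer x)) = \<mu>}"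
    hence reg: "regular x" and eq: "S x = \<mu>" using obj by auto
    have "\<forall>r s. M r s * x s \<le> x r" using sub_iff[OF reg] eq by simp
    hence "mvmult (mstar M) x = x" using mstar_fix[OF _ reg] by blast
    moreover have "x \<noteq> (\<lambda>_. 0)" using reg by (auto simp: regular_def)
    ultimately show "x \<in> {mvmult (mstar M) u | u. u \<noteq> (\<lambda>_. 0)}" by (metis (mono_tags, lifting) mem_Collect_eq)
  next
    fix x assume "x \<in> {mvmult (mstar M) u | u. u \<noteq> (\<lambda>_. 0)}"
    then obtain u where u: "u \<noteq> (\<lambda>_. 0)" and x: "x = mvmult (mstar M) u" by blast
    have sub: "M r s * x s \<le> x r" for r s unfolding x by (rule star_vec_sub[OF cyc])
    obtain j where uj: "u j \<noteq> 0" using u by auto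
    have "1 * u j \<le> mstar M j j * u j" by (intro mult_right_mono' mstar_ge_1)
    also have "\<dots> \<le> x j" unfolding x mvmult_def
      by (rule member_le_sum[where f = "\<lambda>k. mstar M j k * u k"]) auto
    finally have "u j \<le> x j" by simp
    hence xj: "x j \<noteq> 0" using uj by (metis zero_le antisym)
    have reg: "regular x" unfolding regular_def
    proof
      fix r
      have "M r j * x j \<noteq> 0" using Mnz xj by (simp add: mult_eq_0)
      thus "x r \<noteq> 0" using sub[of r j] by (metis zero_le antisym)
    qed
    have "S x = \<mu>" using sub_iff[OF reg] sub lb[OF reg] by simp
    thus "x \<in> {x. regular x \<and> (\<Sum>i\<in>{1..m}. mdist (A i) (outer x)) = \<mu>}" using obj[OF reg] reg by simp
  qed
  have ex: "\<exists>x. regular x \<and> (\<Sum>i\<in>{1..m}. mdist (A i) (outer x)) = \<mu>"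
  proof -
    have "(\<lambda>_::'n. 1::'a) \<noteq> (\<lambda>_. 0)" by (metis zero_neq_one)
    hence "mvmult (mstar M) (\<lambda>_. 1) \<in> {x. regular x \<and> (\<Sum>i\<in>{1..m}. mdist (A i) (outer x)) = \<mu>}"
      unfolding setEq by blast
    thus ?thesis by blast
  qed
  show ?thesis using setEq ex lb obj unfolding M_def by auto
qed

end
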